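(* Let $\mathcal C$ be a finite commutative semigroup. Then $\mathsf D(\mathcal C)=\mathsf d(\mathcal C)+1\le|\mathcal C|$.
   Context: All semigroups are commutative, written additively, and have an identity element $0$; an empty sum equals $0$. For such $\mathcal C$, $\mathsf d(\mathcal C)$ is the smallest $d\in\mathbb N_0\cup\{\infty\}$ such that for all $n\in\mathbb N$ and $c_1,\dots,c_n\in\mathcal C$ there is $\Omega\subset[1,n]$ with $|\Omega|\le d$ and $\sum_{\nu=1}^n c_\nu=\sum_{\nu\in\Omega}c_\nu$. $\mathsf D(\mathcal C)$ is the smallest $\ell\in\mathbb N\cup\{\infty\}$ such that for all $n\ge\ell$ and $c_1,\dots,c_n\in\mathcal C$ there is a proper subset $\Omega\subsetneq[1,n]$ with $\sum_{\nu=1}^n c_\nu=\sum_{\nu\in\Omega}c_\nu$. *)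

theory Defs
  imports Main "HOL-Library.Extended_Nat"
begin

(* Commutative semigroups with identity 0, written additively: type class comm_monoid_add.
   C is a subset of such a structure (in the theorem: the whole finite type). *)

definition small_d :: "'a::comm_monoid_add set \<Rightarrow> enat" where
  "small_d C = Inf {d :: enat. \<forall>n::nat. n \<ge> 1 \<longrightarrow>
      (\<forall>c :: nat \<Rightarrow> 'a. (\<forall>\<nu>\<in>{1..n}. c \<nu> \<in> C) \<longrightarrow>
         (\<exists>\<Omega>. \<Omega> \<subseteq> {1..n} \<and> enat (card \<Omega>) \<le> d \<and>
               sum c {1..n} = sum c \<Omega>))}"

definition large_D :: "'a::comm_monoid_add set \<Rightarrow> enat" where
  "large_D C = Inf {l :: enat. l \<ge> 1 \<and> (\<forall>n::nat. enat n \<ge> l \<longrightarrow>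
      (\<forall>c :: nat \<Rightarrow> 'a. (\<forall>\<nu>\<in>{1..n}. c \<nu> \<in> C) \<longrightarrow>
         (\<exists>\<Omega>. \<Omega> \<subset> {1..n} \<and> sum c {1..n} = sum c \<Omega>)))}"

end

theory Submission
  imports Defs
begin

lemma enat_Inf_in: "x \<in> (A::enat set) \<Longrightarrow> Inf A \<in> A"
  unfolding Inf_enat_def by (auto intro: LeastI)

lemma pigeon:
  fixes c :: "nat \<Rightarrow> 'a::{comm_monoid_add, finite}"
  assumes "n \<ge> card (UNIV::'a set)"
  shows "\<exists>\<Omega>. \<Omega> \<subset> {1..n} \<and> sum c {1..n} = sum c \<Omega>"
proof -
  define s where "s k = sum c {1..k}" for k
  have "\<not> inj_on s {0..n}"
  proof
    assume "inj_on s {0..n}"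
    hence "card (s ` {0..n}) = n + 1" by (simp add: card_image)
    moreover have "card (s ` {0..n}) \<le> card (UNIV::'a set)" by (rule card_mono) auto
    ultimately show False using assms by simp
  qed
  then obtain i j where ij: "i \<in> {0..n}" "j \<in> {0..n}" "i \<noteq> j" "s i = s j"
    unfolding inj_on_def by blast
  then obtain a b where ab: "a < b" "b \<le> n" "s a = s b"
    by (metis atLeastAtMost_iff linorder_neqE_nat)
  define \<Omega> where "\<Omega> = {1..a} \<union> {b+1..n}"
  have "b \<notin> \<Omega>" using ab unfolding \<Omega>_def by auto
  moreover have "b \<in> {1..n}" using ab by auto
  moreover have "\<Omega> \<subseteq> {1..n}" using ab unfolding \<Omega>_def by auto
  ultimately have sub: "\<Omega> \<subset> {1..n}" by blast
  have "sum c {1..n} = s b + sum c {b+1..n}"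
    unfolding s_def using ab by (subst sum.union_disjoint[symmetric]) (auto intro: arg_cong[where f="sum c"])
  also have "\<dots> = s a + sum c {b+1..n}" using ab by simp
  also have "\<dots> = sum c \<Omega>"
    unfolding s_def \<Omega>_def using ab by (subst sum.union_disjoint) auto
  finally show ?thesis using sub by blast
qed

lemma reduce:
  fixes c :: "nat \<Rightarrow> 'a::comm_monoid_add"
  assumes P: "\<forall>n. l \<le> n \<longrightarrow> (\<forall>c :: nat \<Rightarrow> 'a. \<exists>\<Omega>. \<Omega> \<subset> {1..n} \<and> sum c {1..n} = sum c \<Omega>)"
  shows "finite I \<Longrightarrow> \<exists>J. J \<subseteq> I \<and> card J < max l (Suc 0) \<and> sum c I = sum c J"
proof (induction "card I" arbitrary: I rule: less_induct)
  case less
  show ?case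
  proof (cases "card I < max l (Suc 0)")
    case True thus ?thesis by blast
  next
    case False
    obtain h where h: "bij_betw h {1..card I} I" using ex_bij_betw_nat_finite_1[OF less.prems] by blast
    obtain \<Omega> where O: "\<Omega> \<subset> {1..card I}" "sum (c \<circ> h) {1..card I} = sum (c \<circ> h) \<Omega>"
    proof -
      have "l \<le> card I" using False by simp
      thus ?thesis using P[rule_format, of "card I" "c \<circ> h"] that by blast
    qed
    have inj: "inj_on h {1..card I}" using h bij_betw_def by blast
    have injO: "inj_on h \<Omega>" using inj O(1) inj_on_subset by blast
    have "sum c I = sum c (h ` {1..card I})" using bij_betw_imp_surj_on[OF h] by simp
    also have "\<dots> = sum (c \<circ> h) {1..card I}" by (rule sum.reindex[OF inj])
    also have "\<dots> = sum c (h ` \<Omega>)" using O(2) sum.reindex[OF injO, of c] by simp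
    finally have s: "sum c I = sum c (h ` \<Omega>)" .
    have "h ` \<Omega> \<subseteq> h ` {1..card I}" using O(1) by blast
    hence sub: "h ` \<Omega> \<subseteq> I" using bij_betw_imp_surj_on[OF h] by simp
    have "card (h ` \<Omega>) = card \<Omega>" using injO by (rule card_image)
    also have "\<dots> < card {1..card I}" using O(1) by (intro psubset_card_mono) auto
    finally have "card (h ` \<Omega>) < card I" by simp
    moreover have "finite (h ` \<Omega>)" using less.prems sub finite_subset by blast
    ultimately have "\<exists>J. J \<subseteq> h ` \<Omega> \<and> card J < max l (Suc 0) \<and> sum c (h ` \<Omega>) = sum c J"
      using less.hyps by simp
    then obtain J where J: "J \<subseteq> h ` \<Omega>" "card J < max l (Suc 0)" "sum c (h ` \<Omega>) = sum c J"
      by blast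
    have "J \<subseteq> I" using J(1) sub by (rule subset_trans)
    thus ?thesis using J(2,3) s by (intro exI[of _ J]) simp
  qed
qed

theorem lemma5p10:
  fixes C :: "'a::{comm_monoid_add, finite} set"
  assumes "C = UNIV"
  shows "large_D C = small_d C + 1 \<and> small_d C + 1 \<le> enat (card C)"
proof -
  define SD where "SD = {l :: enat. l \<ge> 1 \<and> (\<forall>n::nat. enat n \<ge> l \<longrightarrow>
      (\<forall>c :: nat \<Rightarrow> 'a. (\<forall>\<nu>\<in>{1..n}. c \<nu> \<in> C) \<longrightarrow>
         (\<exists>\<Omega>. \<Omega> \<subset> {1..n} \<and> sum c {1..n} = sum c \<Omega>)))}"
  define Sd where "Sd = {d :: enat. \<forall>n::nat. n \<ge> 1 \<longrightarrow>
      (\<forall>c :: nat \<Rightarrow> 'a. (\<forall>\<nu>\<in>{1..n}. c \<nu> \<in> C) \<longrightarrow>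
         (\<exists>\<Omega>. \<Omega> \<subseteq> {1..n} \<and> enat (card \<Omega>) \<le> d \<and>
               sum c {1..n} = sum c \<Omega>))}"
  have LD: "large_D C = Inf SD" unfolding large_D_def SD_def ..
  have Ld: "small_d C = Inf Sd" unfolding small_d_def Sd_def ..
  have cpos: "card C \<ge> 1" using assms by (simp add: Suc_le_eq card_gt_0_iff)
  have cSD: "enat (card C) \<in> SD" unfolding SD_def
  proof (intro CollectI conjI allI impI)
    show "1 \<le> enat (card C)" using cpos by (simp add: one_enat_def)
    fix n :: nat and c :: "nat \<Rightarrow> 'a" assume "enat (card C) \<le> enat n"
    hence "card (UNIV::'a set) \<le> n" using assms by simp
    thus "\<exists>\<Omega>. \<Omega> \<subset> {1..n} \<and> sum c {1..n} = sum c \<Omega>" by (rule pigeon)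
  qed
  hence LSD: "Inf SD \<in> SD" by (rule enat_Inf_in)
  have "Inf SD \<le> enat (card C)" using cSD by (rule Inf_lower)
  then obtain l where l: "Inf SD = enat l" "l \<le> card C" by (cases "Inf SD") auto
  have "enat l \<in> SD" using LSD l(1) by simp
  have LSD': "1 \<le> enat l \<and> (\<forall>n::nat. enat n \<ge> enat l \<longrightarrow>
      (\<forall>c :: nat \<Rightarrow> 'a. (\<forall>\<nu>\<in>{1..n}. c \<nu> \<in> C) \<longrightarrow>
         (\<exists>\<Omega>. \<Omega> \<subset> {1..n} \<and> sum c {1..n} = sum c \<Omega>)))"
    using \<open>enat l \<in> SD\<close> unfolding SD_def mem_Collect_eq .
  have l1: "l \<ge> 1" using LSD' by (simp add: one_enat_def)
  have Pl: "\<forall>n. l \<le> n \<longrightarrow> (\<forall>c :: nat \<Rightarrow> 'a. \<exists>\<Omega>. \<Omega> \<subset> {1..n} \<and> sum c {1..n} = sum c \<Omega>)"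
    using LSD' assms by simp
  have lSd: "enat (l - 1) \<in> Sd" unfolding Sd_def
  proof (intro CollectI allI impI)
    fix n :: nat and c :: "nat \<Rightarrow> 'a"
    obtain J where "J \<subseteq> {1..n}" "card J < max l (Suc 0)" "sum c {1..n} = sum c J"
      using reduce[OF Pl, of "{1..n}" c] by auto
    thus "\<exists>\<Omega>. \<Omega> \<subseteq> {1..n} \<and> enat (card \<Omega>) \<le> enat (l - 1) \<and> sum c {1..n} = sum c \<Omega>"
      using l1 by (intro exI[of _ J]) auto
  qed
  hence LSd: "Inf Sd \<in> Sd" by (rule enat_Inf_in)
  have "Inf Sd \<le> enat (l - 1)" using lSd by (rule Inf_lower)
  then obtain d where d: "Inf Sd = enat d" "d \<le> l - 1" by (cases "Inf Sd") auto
  have "enat d \<in> Sd" using LSd d(1) by simp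
  have "enat (d + 1) \<in> SD" unfolding SD_def
  proof (intro CollectI conjI allI impI)
    show "1 \<le> enat (d+1)" by (simp add: one_enat_def)
    fix n :: nat and c :: "nat \<Rightarrow> 'a"
    assume "enat (d+1) \<le> enat n"
    hence n: "d + 1 \<le> n" by simp
    have LSd': "\<forall>n::nat. n \<ge> 1 \<longrightarrow>
      (\<forall>c :: nat \<Rightarrow> 'a. (\<forall>\<nu>\<in>{1..n}. c \<nu> \<in> C) \<longrightarrow>
         (\<exists>\<Omega>. \<Omega> \<subseteq> {1..n} \<and> enat (card \<Omega>) \<le> enat d \<and>
               sum c {1..n} = sum c \<Omega>))"
      using \<open>enat d \<in> Sd\<close> unfolding Sd_def mem_Collect_eq .
    have "1 \<le> n" using n by simp
    then obtain \<Omega> where "\<Omega> \<subseteq> {1..n}" "enat (card \<Omega>) \<le> enat d" "sum c {1..n} = sum c \<Omega>"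
      using LSd'[rule_format, of n c] assms by blast
    moreover have "\<Omega> \<noteq> {1..n}" using calculation(2) n by auto
    ultimately show "\<exists>\<Omega>. \<Omega> \<subset> {1..n} \<and> sum c {1..n} = sum c \<Omega>"
      by (intro exI[of _ \<Omega>]) (simp add: psubset_eq)
  qed
  hence "Inf SD \<le> enat (d + 1)" by (rule Inf_lower)
  hence "l = d + 1" using l(1) d(2) l1 by simp
  thus ?thesis using LD Ld l d by (simp add: one_enat_def)
qed

end
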